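(* Let $G=(V,E)$ be the bipartite graph with $V=\{v_1,\dots,v_{10}\}$ and the 14 edges $\{v_1,v_6\},\{v_1,v_7\},\{v_2,v_6\},\{v_2,v_7\},\{v_2,v_8\},\{v_3,v_7\},\{v_3,v_9\},\{v_3,v_{10}\},\{v_4,v_8\},\{v_4,v_9\},\{v_4,v_{10}\},\{v_5,v_8\},\{v_5,v_9\},\{v_5,v_{10}\}$, and let $R=\{\{v_2,v_7\},\{v_4,v_9\},\{v_5,v_{10}\}\}$. Let $y\in\mathbb{R}^E$ be given by $y_{\{v_1,v_6\}}=\frac23$ and $y_e=\frac13$ for all other $e\in E$. Then $y\in Q_{(G,R)}$.
   Context: For a bipartite graph $G=(V,E)$ with $|V|=2n$ (here $n=5$) and red edges $R$, let $\mathcal{L}_{\mathrm{all}}(G)$ be the set of labelings $L\colon V\to\{0,1\}$ with $|L^{-1}(1)|\equiv n\pmod 2$, and $E_L=\{\{u,v\}\in E\setminus R\colon L(u)=L(v)\}\cup\{\{u,v\}\in R\colon L(u)\ne L(v)\}$. Then $Q_{(G,R)}=\{x\in\mathbb{R}^E_{\ge0}\colon x(\delta(u))=1\ \forall u\in V,\ x(E_L)\ge1\ \forall L\in\mathcal{L}_{\mathrm{all}}(G)\}$, where $\delta(u)$ is the set of edges at $u$ and $x(S)=\sum_{e\in S}x_e$. *)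

theory Defs
  imports Complex_Main
begin

text \<open>Graphs: vertex set V, edges E as a set of 2-element vertex sets, red edges R \<subseteq> E.
  Vectors x in R^E are functions on edges (values outside E are irrelevant).\<close>

definition delta :: "'v set set \<Rightarrow> 'v \<Rightarrow> 'v set set" where
  "delta E u = {e \<in> E. u \<in> e}"

definition xsum :: "('v set \<Rightarrow> real) \<Rightarrow> 'v set set \<Rightarrow> real" where
  "xsum x S = (\<Sum>e\<in>S. x e)"

definition labelings_all :: "'v set \<Rightarrow> nat \<Rightarrow> ('v \<Rightarrow> bool) set" where
  "labelings_all V n = {L. card {v \<in> V. L v} mod 2 = n mod 2}"

definition E_L :: "'v set set \<Rightarrow> 'v set set \<Rightarrow> ('v \<Rightarrow> bool) \<Rightarrow> 'v set set" where
  "E_L E R L = {e \<in> E - R. \<exists>u v. e = {u, v} \<and> L u = L v}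
             \<union> {e \<in> R. \<exists>u v. e = {u, v} \<and> L u \<noteq> L v}"

definition Q_GR :: "'v set \<Rightarrow> 'v set set \<Rightarrow> 'v set set \<Rightarrow> nat \<Rightarrow> ('v set \<Rightarrow> real) set" where
  "Q_GR V E R n = {x. (\<forall>e\<in>E. x e \<ge> 0)
                      \<and> (\<forall>u\<in>V. xsum x (delta E u) = 1)
                      \<and> (\<forall>L\<in>labelings_all V n. xsum x (E_L E R L) \<ge> 1)}"

definition G19_V :: "nat set" where "G19_V = {1..10}"

definition G19_E :: "nat set set" where
  "G19_E = {{1,6},{1,7},{2,6},{2,7},{2,8},{3,7},{3,9},{3,10},{4,8},{4,9},{4,10},
            {5,8},{5,9},{5,10}}"

definition G19_R :: "nat set set" where
  "G19_R = {{2,7},{4,9},{5,10}}"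

definition y19 :: "nat set \<Rightarrow> real" where
  "y19 e = (if e = {1,6} then 2/3 else 1/3)"

end

theory Submission
  imports Defs
begin

lemma mem_EL:
  assumes "a \<noteq> b" "R \<subseteq> E"
  shows "{a,b} \<in> E_L E R L \<longleftrightarrow> {a,b} \<in> E \<and> ({a,b} \<in> R \<longrightarrow> L a \<noteq> L b) \<and> ({a,b} \<notin> R \<longrightarrow> L a = L b)"
  using assms unfolding E_L_def by (auto simp: doubleton_eq_iff)

definition ps :: "(nat \<times> nat) list" where
  "ps = [(1,6),(1,7),(2,6),(2,7),(2,8),(3,7),(3,9),(3,10),(4,8),(4,9),(4,10),(5,8),(5,9),(5,10)]"

lemma E_img: "G19_E = (\<lambda>(a,b). {a,b}) ` set ps"
  unfolding G19_E_def ps_def by simp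

lemma inj: "inj_on (\<lambda>(a,b). {a::nat,b}) (set ps)"
  unfolding ps_def inj_on_def by (auto simp: doubleton_eq_iff)

lemma EL_sub: "R \<subseteq> E \<Longrightarrow> E_L E R L \<subseteq> E"
  unfolding E_L_def by auto

lemma RE: "G19_R \<subseteq> G19_E" unfolding G19_R_def G19_E_def by auto

lemma sum_filter_E: "(\<Sum>e\<in>{e \<in> G19_E. P e}. y19 e) =
   (\<Sum>p\<leftarrow>ps. if P (case p of (a,b) \<Rightarrow> {a,b}) then y19 (case p of (a,b) \<Rightarrow> {a,b}) else 0)"
proof -
  have fin: "finite G19_E" unfolding G19_E_def by simp
  have "(\<Sum>e\<in>{e \<in> G19_E. P e}. y19 e) = (\<Sum>e\<in>G19_E. if P e then y19 e else 0)"
    using fin by (simp add: sum.inter_filter)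
  also have "\<dots> = (\<Sum>p\<in>set ps. if P (case p of (a,b) \<Rightarrow> {a,b}) then y19 (case p of (a,b) \<Rightarrow> {a,b}) else 0)"
    unfolding E_img by (subst sum.reindex[OF inj]) (simp add: comp_def)
  also have "\<dots> = (\<Sum>p\<leftarrow>ps. if P (case p of (a,b) \<Rightarrow> {a,b}) then y19 (case p of (a,b) \<Rightarrow> {a,b}) else 0)"
    by (subst sum_list_distinct_conv_sum_set) (auto simp: ps_def)
  finally show ?thesis .
qed

lemma xsum_EL: "xsum y19 (E_L G19_E G19_R L) =
   (\<Sum>p\<leftarrow>ps. if (case p of (a,b) \<Rightarrow> {a,b}) \<in> E_L G19_E G19_R L then y19 (case p of (a,b) \<Rightarrow> {a,b}) else 0)"
proof -
  have fin: "finite G19_E" unfolding G19_E_def by simp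
  have "xsum y19 (E_L G19_E G19_R L) = (\<Sum>e\<in>G19_E. if e \<in> E_L G19_E G19_R L then y19 e else 0)"
    unfolding xsum_def using fin EL_sub[OF RE, of L]
    by (simp add: sum.inter_restrict[symmetric] Int_absorb1 Int_commute)
  also have "\<dots> = (\<Sum>p\<in>set ps. if (case p of (a,b) \<Rightarrow> {a,b}) \<in> E_L G19_E G19_R L then y19 (case p of (a,b) \<Rightarrow> {a,b}) else 0)"
    unfolding E_img by (subst sum.reindex[OF inj]) (simp add: comp_def)
  also have "\<dots> = (\<Sum>p\<leftarrow>ps. if (case p of (a,b) \<Rightarrow> {a,b}) \<in> E_L G19_E G19_R L then y19 (case p of (a,b) \<Rightarrow> {a,b}) else 0)"
    by (subst sum_list_distinct_conv_sum_set) (auto simp: ps_def)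
  finally show ?thesis .
qed

lemma xsum_EL2: "xsum y19 (E_L G19_E G19_R L) =
  (if L 1 = L 6 then 2/3 else 0) + (if L 1 = L 7 then 1/3 else 0) + (if L 2 = L 6 then 1/3 else 0)
  + (if L 2 \<noteq> L 7 then 1/3 else 0) + (if L 2 = L 8 then 1/3 else 0) + (if L 3 = L 7 then 1/3 else 0)
  + (if L 3 = L 9 then 1/3 else 0) + (if L 3 = L 10 then 1/3 else 0) + (if L 4 = L 8 then 1/3 else 0)
  + (if L 4 \<noteq> L 9 then 1/3 else 0) + (if L 4 = L 10 then 1/3 else 0) + (if L 5 = L 8 then 1/3 else 0)
  + (if L 5 = L 9 then 1/3 else 0) + (if L 5 \<noteq> L 10 then 1/3 else 0)"
  unfolding xsum_EL by (simp add: ps_def mem_EL RE G19_E_def G19_R_def y19_def doubleton_eq_iff)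

lemma card_L: "card {v \<in> G19_V. L v} = (\<Sum>v\<in>{1..10::nat}. if L v then 1 else 0)"
  unfolding G19_V_def by (subst card_eq_sum) (simp add: sum.inter_filter[symmetric])

lemma card_L2: "card {v \<in> G19_V. L v} = (if L 1 then 1 else 0) + (if L 2 then 1 else 0) + (if L 3 then 1 else 0)
  + (if L 4 then 1 else 0) + (if L 5 then 1 else 0) + (if L 6 then 1 else 0) + (if L 7 then 1 else 0)
  + (if L 8 then 1 else 0) + (if L 9 then 1 else 0) + (if L 10 then 1 else 0)"
  unfolding card_L by (simp add: numeral_eq_Suc)

lemma labs: assumes "L \<in> labelings_all G19_V 5" shows "xsum y19 (E_L G19_E G19_R L) \<ge> 1"
proof -
  have c: "card {v \<in> G19_V. L v} mod 2 = 1" using assms unfolding labelings_all_def by simp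
  show ?thesis using c unfolding xsum_EL2 card_L2
    by (cases "L 1"; cases "L 2"; cases "L 3"; cases "L 4"; cases "L 5"; cases "L 6"; cases "L 7";
        cases "L 8"; cases "L 9"; cases "L 10"; simp)
qed

theorem lemma19:
  shows "y19 \<in> Q_GR G19_V G19_E G19_R 5"
  unfolding Q_GR_def
proof (intro CollectI conjI ballI)
  fix e assume "e \<in> G19_E" then show "y19 e \<ge> 0" by (simp add: y19_def)
next
  fix u assume "u \<in> G19_V"
  then have "u=1\<or>u=2\<or>u=3\<or>u=4\<or>u=5\<or>u=6\<or>u=7\<or>u=8\<or>u=9\<or>u=10" unfolding G19_V_def by auto presburger
  then show "xsum y19 (delta G19_E u) = 1"
    unfolding xsum_def delta_def sum_filter_E by (auto simp: ps_def y19_def doubleton_eq_iff)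
next
  fix L assume "L \<in> labelings_all G19_V 5" then show "xsum y19 (E_L G19_E G19_R L) \<ge> 1" by (rule labs)
qed

end
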